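(* Let $t\in\mathbb{N}$ and $C=20t$. Suppose $H$ is a bipartite graph with parts $X$ and $Y$ such that $e(H)\ge C|Y|$ and $d_H(x)\ge C|Y|^{1/2}$ for every $x\in X$. Then $H$ contains $P_t^{\square}$ as a subgraph.
   Context: $P_t$ denotes the path with $t$ vertices. $P_t^{\square}=P_t\square K_2$ is the graph with vertices $x_0,\dots,x_{t-1},y_0,\dots,y_{t-1}$ and edges $x_iy_i$ ($0\le i\le t-1$) and $x_ix_{i+1}$, $y_iy_{i+1}$ ($0\le i\le t-2$). *)

theory Defs
  imports Complex_Main
begin

text \<open>Vertices of H are encoded in the sum type: Inl x for x in X, Inr y for y in Y.\<close>

definition bip_graph :: "'a set \<Rightarrow> 'b set \<Rightarrow> ('a \<times> 'b) set \<Rightarrow> bool" where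
  "bip_graph X Y E \<longleftrightarrow> finite X \<and> finite Y \<and> E \<subseteq> X \<times> Y"

definition num_edges :: "('a \<times> 'b) set \<Rightarrow> nat" where
  "num_edges E = card E"

definition degX :: "('a \<times> 'b) set \<Rightarrow> 'a \<Rightarrow> nat" where
  "degX E x = card {y. (x, y) \<in> E}"

definition bip_adj :: "('a \<times> 'b) set \<Rightarrow> ('a + 'b) \<Rightarrow> ('a + 'b) \<Rightarrow> bool" where
  "bip_adj E u v \<longleftrightarrow> (\<exists>x y. (x, y) \<in> E \<and> ((u = Inl x \<and> v = Inr y) \<or> (u = Inr y \<and> v = Inl x)))"

text \<open>The ladder P_t square K_2: vertex (False, i) is x_i, (True, i) is y_i, for i < t.\<close>

definition ladder_verts :: "nat \<Rightarrow> (bool \<times> nat) set" where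
  "ladder_verts t = UNIV \<times> {..<t}"

definition ladder_edge :: "nat \<Rightarrow> (bool \<times> nat) \<Rightarrow> (bool \<times> nat) \<Rightarrow> bool" where
  "ladder_edge t u v \<longleftrightarrow> u \<in> ladder_verts t \<and> v \<in> ladder_verts t \<and>
     ((snd u = snd v \<and> fst u \<noteq> fst v) \<or>
      (fst u = fst v \<and> (snd v = Suc (snd u) \<or> snd u = Suc (snd v))))"

definition contains_ladder :: "'a set \<Rightarrow> 'b set \<Rightarrow> ('a \<times> 'b) set \<Rightarrow> nat \<Rightarrow> bool" where
  "contains_ladder X Y E t \<longleftrightarrow> (\<exists>f. inj_on f (ladder_verts t) \<and>
      f ` ladder_verts t \<subseteq> Inl ` X \<union> Inr ` Y \<and>
      (\<forall>u v. ladder_edge t u v \<longrightarrow> bip_adj E (f u) (f v)))"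

end

theory Submission
  imports Defs
begin


lemma arith1:
  fixes a d c k :: nat
  assumes "d < k" "d \<le> a" "1 \<le> c" "1 \<le> k"
  shows "2 * int a - int (2*k-1) * int c < 2 * int (a-d) - int (2*k-1) * int (c-1)"
proof -
  have "int (2*k-1) * int (c-1) = int (2*k-1) * int c - int (2*k-1)"
    using assms by (simp add: of_nat_diff algebra_simps)
  thus ?thesis using assms by (simp add: of_nat_diff)
qed

lemma core:
  fixes V :: "'n set" and R :: "'r set" and nd :: "'r \<Rightarrow> 'n set" and k :: nat
  assumes fV: "finite V" and fR: "finite R" and sub: "\<forall>r\<in>R. nd r \<subseteq> V"
    and big: "(2*k - 1) * card V < 2 * card R" and k1: "k \<ge> 1"
  shows "\<exists>W\<subseteq>V. {r\<in>R. nd r \<subseteq> W} \<noteq> {} \<and> (\<forall>v\<in>W. k \<le> card {r\<in>R. nd r \<subseteq> W \<and> v \<in> nd r})"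
proof -
  define f where "f W = 2 * int (card {r\<in>R. nd r \<subseteq> W}) - int (2*k - 1) * int (card W)" for W
  have fin: "finite (f ` Pow V)" using fV by simp
  have "Max (f ` Pow V) \<in> f ` Pow V" using Max_in[OF fin] by blast
  then obtain W where W: "W \<in> Pow V" "f W = Max (f ` Pow V)" by (metis imageE)
  have mx: "f W' \<le> f W" if "W' \<in> Pow V" for W'
    using W(2) Max_ge[OF fin] that by simp
  have fVW: "f V \<le> f W" using mx by simp
  have "{r\<in>R. nd r \<subseteq> V} = R" using sub by auto
  hence "f V = 2 * int (card R) - int (2*k - 1) * int (card V)" unfolding f_def by simp
  moreover have "int ((2*k-1)*card V) < int (2*card R)" using big by (simp only: of_nat_less_iff)
  ultimately have "f V > 0" by simp
  with fVW have pos: "f W > 0" by linarith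
  have ne: "{r\<in>R. nd r \<subseteq> W} \<noteq> {}"
  proof
    assume "{r\<in>R. nd r \<subseteq> W} = {}"
    hence "card {r\<in>R. nd r \<subseteq> W} = 0" by (simp only: card.empty)
    hence "f W \<le> 0" unfolding f_def by simp
    with pos show False by simp
  qed
  have deg: "k \<le> card {r\<in>R. nd r \<subseteq> W \<and> v \<in> nd r}" if v: "v \<in> W" for v
  proof (rule ccontr)
    assume "\<not> ?thesis"
    hence lt: "card {r\<in>R. nd r \<subseteq> W \<and> v \<in> nd r} < k" by simp
    let ?W' = "W - {v}"
    have eq: "{r\<in>R. nd r \<subseteq> ?W'} = {r\<in>R. nd r \<subseteq> W} - {r\<in>R. nd r \<subseteq> W \<and> v \<in> nd r}" by auto
    have fW: "finite W" using W(1) fV finite_subset by auto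
    have c1: "card {r\<in>R. nd r \<subseteq> ?W'} = card {r\<in>R. nd r \<subseteq> W} - card {r\<in>R. nd r \<subseteq> W \<and> v \<in> nd r}"
      unfolding eq by (rule card_Diff_subset) (use fR in auto)
    have c1': "card {r\<in>R. nd r \<subseteq> W \<and> v \<in> nd r} \<le> card {r\<in>R. nd r \<subseteq> W}"
      by (rule card_mono) (use fR in auto)
    have c2: "card ?W' = card W - 1" using v fW by simp
    have cW: "card W \<ge> 1" using v fW by (metis One_nat_def Suc_leI card_gt_0_iff empty_iff)
    have "f ?W' > f W"
      unfolding f_def c1 c2 by (rule arith1[OF lt c1' cW k1])
    moreover have "?W' \<in> Pow V" using W(1) by auto
    ultimately show False using mx[of ?W'] by linarith
  qed
  show ?thesis using W(1) ne deg by auto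
qed



lemma arith_main:
  fixes e n x r v t :: real
  assumes t1: "t \<ge> 1" and n1: "n \<ge> 1" and he: "e \<ge> 20 * t * n" and hx: "x * (20 * t * sqrt n) \<le> e"
    and x0: "x \<ge> 0" and hr: "r \<ge> e^2/n - e" and hv: "v \<le> e + x^2"
  shows "(4*t-1) * v < 2 * r"
proof -
  have e0: "e > 0" using he t1 n1 by (smt (verit) mult_pos_pos)
  have h1: "e * (20*t*n) \<le> e * e" using he e0 by (simp add: mult_left_mono)
  have "(x * (20 * t * sqrt n))^2 \<le> e^2" using hx x0 t1 n1 by (intro power_mono) auto
  hence h2: "x^2 * n * (400 * t^2) \<le> e^2" using n1 by (simp add: power_mult_distrib algebra_simps)
  have a1: "(4*t+1) * (e*n) \<le> e^2/4"
  proof -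
    have "(4*t+1) * (e*n) \<le> 5*t*(e*n)" using t1 e0 n1 by (intro mult_right_mono) auto
    also have "... = e*(20*t*n)/4" by simp
    also have "... \<le> e*e/4" using h1 by linarith
    finally show ?thesis by (simp add: power2_eq_square)
  qed
  have a2: "(4*t-1) * (x^2*n) \<le> e^2/100"
  proof -
    have "(4*t-1) * (x^2*n) \<le> (4*t) * (x^2*n)" using x0 n1 by (intro mult_right_mono) auto
    also have "... \<le> (4*t) * (x^2*n) * t" using mult_left_mono[OF t1, of "(4*t)*(x^2*n)"] x0 n1 t1 by simp
    also have "... = x^2 * n * (400 * t^2) / 100" by (simp add: power2_eq_square)
    also have "... \<le> e^2/100" using h2 by linarith
    finally show ?thesis .
  qed
  have "(4*t-1) * v * n \<le> (4*t-1) * (e + x^2) * n" using mult_right_mono[OF mult_left_mono[OF hv, of "4*t-1"], of n] t1 n1 by linarith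
  also have "... = (4*t-1)*(e*n) + (4*t-1)*(x^2*n)" by (simp add: algebra_simps)
  also have "... < 2*e^2 - 2*(e*n)"
  proof -
    have "(4*t-1)*(e*n) + 2*(e*n) = (4*t+1)*(e*n)" by algebra
    moreover have "e^2 > 0" using e0 by simp
    ultimately show ?thesis using a1 a2 by linarith
  qed
  also have "... = 2 * ((e^2/n - e) * n)" using n1 by (simp add: field_simps)
  also have "... \<le> 2 * r * n" using mult_right_mono[OF hr, of n] n1 by linarith
  finally have "(4*t-1) * v * n < 2 * r * n" .
  thus ?thesis using n1 by (simp add: mult_less_cancel_right)
qed



lemma cs_ineq:
  fixes d :: "'b \<Rightarrow> real" and Y :: "'b set"
  assumes "finite Y" "Y \<noteq> {}"
  shows "(\<Sum>w\<in>Y. d w)^2 \<le> real (card Y) * (\<Sum>w\<in>Y. (d w)^2)"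
proof -
  define S where "S = (\<Sum>w\<in>Y. d w)"
  define n where "n = real (card Y)"
  have n0: "n > 0" using assms unfolding n_def by (simp add: card_gt_0_iff)
  have "0 \<le> (\<Sum>w\<in>Y. (d w * n - S)^2)" by (simp add: sum_nonneg)
  also have "(\<Sum>w\<in>Y. (d w * n - S)^2) = (\<Sum>w\<in>Y. (d w)^2 * n^2 - 2 * n * S * d w + S^2)"
    by (rule sum.cong) (simp_all add: power2_eq_square algebra_simps)
  also have "... = n^2 * (\<Sum>w\<in>Y. (d w)^2) - 2*n*S*S + n * S^2"
    by (simp add: sum.distrib sum_subtractf sum_distrib_left sum_distrib_right n_def S_def algebra_simps)
  finally have "n * S^2 \<le> n^2 * (\<Sum>w\<in>Y. (d w)^2)" by (simp add: power2_eq_square algebra_simps)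
  hence "n * S^2 \<le> n * (n * (\<Sum>w\<in>Y. (d w)^2))" by (simp add: power2_eq_square algebra_simps)
  hence "S^2 \<le> n * (\<Sum>w\<in>Y. (d w)^2)" using n0 by (simp add: mult_le_cancel_left_pos)
  thus ?thesis unfolding S_def n_def .
qed



theorem lemma2p6:
  fixes t :: nat and X :: "'a set" and Y :: "'b set" and E :: "('a \<times> 'b) set"
  assumes "bip_graph X Y E"
    and "Y \<noteq> {}"
    and "real (num_edges E) \<ge> 20 * real t * real (card Y)"
    and "\<forall>x\<in>X. real (degX E x) \<ge> 20 * real t * sqrt (real (card Y))"
  shows "contains_ladder X Y E t"
proof (cases "t = 0")
  case True
  show ?thesis unfolding contains_ladder_def ladder_edge_def ladder_verts_def True by auto
next
  case False
  hence t1: "t \<ge> 1" by simp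
  have fX: "finite X" and fY: "finite Y" and EXY: "E \<subseteq> X \<times> Y" using assms(1) unfolding bip_graph_def by auto
  have fE: "finite E" using EXY fX fY finite_subset by blast
  define N where "N w = {a. (a,w) \<in> E}" for w
  have fN: "finite (N w)" for w
  proof -
    have "N w \<subseteq> X" using EXY unfolding N_def by auto
    thus ?thesis using fX finite_subset by blast
  qed
  define R :: "('b \<times> ('a \<times> 'a)) set" where
    "R = Sigma Y (\<lambda>w. {p. fst p \<in> N w \<and> snd p \<in> N w \<and> fst p \<noteq> snd p})"
  define nd :: "'b \<times> ('a \<times> 'a) \<Rightarrow> ('a \<times> 'b + 'a \<times> 'a) set" where
    "nd r = {Inl (fst (snd r), fst r), Inl (snd (snd r), fst r), Inr (snd r)}" for r
  define V :: "('a \<times> 'b + 'a \<times> 'a) set" where "V = Inl ` E \<union> Inr ` (X \<times> X)"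
  have fV: "finite V" unfolding V_def using fE fX by simp
  have cardV: "card V \<le> card E + card X * card X"
  proof -
    have "card V \<le> card (Inl ` E :: ('a \<times> 'b + 'a \<times> 'a) set) + card (Inr ` (X \<times> X) :: ('a \<times> 'b + 'a \<times> 'a) set)"
      unfolding V_def by (rule card_Un_le)
    also have "... \<le> card E + card (X \<times> X)" by (intro add_mono card_image_le fE) (simp add: fX)
    finally show ?thesis by (simp add: card_cartesian_product)
  qed
  have pairs: "{p. fst p \<in> N w \<and> snd p \<in> N w \<and> fst p \<noteq> snd p} = N w \<times> N w - (\<lambda>a. (a,a)) ` N w" for w
    by auto
  have cpairs: "card {p. fst p \<in> N w \<and> snd p \<in> N w \<and> fst p \<noteq> snd p} = card (N w) * card (N w) - card (N w)" for w
  proof -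
    have "card (N w \<times> N w - (\<lambda>a. (a,a)) ` N w) = card (N w \<times> N w) - card ((\<lambda>a. (a,a)) ` N w)"
      by (rule card_Diff_subset) (auto simp: fN)
    moreover have "card ((\<lambda>a. (a,a)) ` N w) = card (N w)" by (rule card_image) (auto simp: inj_on_def)
    ultimately show ?thesis unfolding pairs by (simp add: card_cartesian_product)
  qed
  have fR: "finite R" unfolding R_def pairs using fY fN by auto
  have cardR: "card R = (\<Sum>w\<in>Y. card (N w) * card (N w) - card (N w))"
    unfolding R_def using fY fN by (subst card_SigmaI) (auto simp: cpairs[unfolded pairs] pairs)
  have cardE: "card E = (\<Sum>w\<in>Y. card (N w))"
  proof -
    have "E = (\<lambda>(w,a). (a,w)) ` Sigma Y N" using EXY unfolding N_def by auto
    moreover have "inj_on (\<lambda>(w,a). (a,w)) (Sigma Y N)" by (auto simp: inj_on_def)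
    ultimately have "card E = card (Sigma Y N)" by (simp add: card_image)
    thus ?thesis using fY fN by simp
  qed
  have cardE2: "card E = (\<Sum>x\<in>X. degX E x)"
  proof -
    have "E = Sigma X (\<lambda>x. {y. (x,y) \<in> E})" using EXY by auto
    hence "card E = card (Sigma X (\<lambda>x. {y. (x,y) \<in> E}))" by simp
    also have "... = (\<Sum>x\<in>X. degX E x)" unfolding degX_def
      by (rule card_SigmaI) (use fX fY EXY in \<open>auto intro: finite_subset\<close>)
    finally show ?thesis .
  qed
  define e where "e = real (card E)"
  define n where "n = real (card Y)"
  define x where "x = real (card X)"
  define d where "d w = real (card (N w))" for w
  have n1: "n \<ge> 1" using fY assms(2) unfolding n_def by (simp add: Suc_leI card_gt_0_iff)
  have he: "e \<ge> 20 * real t * n" using assms(3) unfolding e_def n_def num_edges_def by simp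
  have hx: "x * (20 * real t * sqrt n) \<le> e"
  proof -
    have "real (card X) * (20 * real t * sqrt n) \<le> (\<Sum>y\<in>X. real (degX E y))"
      by (rule sum_bounded_below) (use assms(4) n_def in auto)
    also have "... = e" unfolding e_def cardE2 by simp
    finally show ?thesis unfolding x_def .
  qed
  have sumd: "(\<Sum>w\<in>Y. d w) = e" unfolding e_def d_def cardE by simp
  have hr: "real (card R) \<ge> e^2/n - e"
  proof -
    have "real (card R) = (\<Sum>w\<in>Y. (d w)^2 - d w)" unfolding cardR of_nat_sum d_def
      by (rule sum.cong) (auto simp: of_nat_diff power2_eq_square)
    also have "... = (\<Sum>w\<in>Y. (d w)^2) - e" using sumd by (simp add: sum_subtractf)
    finally have r: "real (card R) = (\<Sum>w\<in>Y. (d w)^2) - e" .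
    have "e^2 \<le> n * (\<Sum>w\<in>Y. (d w)^2)" using cs_ineq[OF fY assms(2), of d] sumd n_def by simp
    hence "e^2/n \<le> (\<Sum>w\<in>Y. (d w)^2)" using n1 by (simp add: divide_le_eq mult.commute)
    thus ?thesis using r by simp
  qed
  have hv: "real (card V) \<le> e + x^2"
  proof -
    have "real (card V) \<le> real (card E + card X * card X)" using cardV by (simp only: of_nat_le_iff)
    thus ?thesis unfolding e_def x_def by (simp add: power2_eq_square)
  qed
  have "(4 * real t - 1) * real (card V) < 2 * real (card R)"
    by (rule arith_main[OF _ n1 he hx _ hr hv]) (use t1 x_def in auto)
  hence big: "(2 * (2*t) - 1) * card V < 2 * card R"
  proof -
    assume h: "(4 * real t - 1) * real (card V) < 2 * real (card R)"
    have c: "real (2 * (2*t) - 1) = 4 * real t - 1" using t1 by (simp add: of_nat_diff)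
    have "real ((2 * (2*t) - 1) * card V) = real (2 * (2*t) - 1) * real (card V)" by (simp only: of_nat_mult)
    moreover have "real (2 * (2*t) - 1) * real (card V) < 2 * real (card R)" by (metis c h)
    ultimately have "real ((2 * (2*t) - 1) * card V) < real (2 * card R)" by simp
    thus ?thesis by (simp only: of_nat_less_iff)
  qed
  have sub: "\<forall>r\<in>R. nd r \<subseteq> V" unfolding R_def nd_def V_def N_def using EXY by auto
  obtain W where WV: "W \<subseteq> V" and RAne: "{r\<in>R. nd r \<subseteq> W} \<noteq> {}"
    and deg: "\<And>v. v \<in> W \<Longrightarrow> 2*t \<le> card {r\<in>R. nd r \<subseteq> W \<and> v \<in> nd r}"
    using core[OF fV fR sub big] t1 by auto
  have alive: "(a,w) \<in> E" if "Inl (a,w) \<in> W" for a w using that WV unfolding V_def by auto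
  have step: "\<exists>a' w'. a' \<notin> U \<and> w' \<notin> B \<and> (a',w) \<in> E \<and> (a,w') \<in> E \<and> Inl (a',w') \<in> W"
    if aw: "Inl (a,w) \<in> W" and fU: "finite U" and cU: "card U < t" and fB: "finite B" and cB: "card B < t"
    for a w and U :: "'a set" and B :: "'b set"
  proof -
    let ?D = "{r\<in>R. nd r \<subseteq> W \<and> Inl (a,w) \<in> nd r}"
    let ?Bad = "(\<lambda>x. (w,(a,x))) ` U \<union> (\<lambda>x. (w,(x,a))) ` U"
    have "card ?Bad \<le> card ((\<lambda>x. (w,(a,x))) ` U) + card ((\<lambda>x. (w,(x,a))) ` U)" by (rule card_Un_le)
    also have "... \<le> card U + card U" by (intro add_mono card_image_le fU)
    finally have "card ?Bad < 2*t" using cU by simp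
    moreover have "2*t \<le> card ?D" using deg[OF aw] .
    ultimately have "\<not> ?D \<subseteq> ?Bad" using card_mono[of ?Bad ?D] fU by fastforce
    then obtain w0 x x' where r: "(w0,(x,x')) \<in> ?D" "(w0,(x,x')) \<notin> ?Bad" by auto
    have xx: "w0 \<in> Y" "(x,w0) \<in> E" "(x',w0) \<in> E" "x \<noteq> x'" using r(1) unfolding R_def N_def by auto
    have pW: "Inr (x,x') \<in> W" using r(1) unfolding nd_def by auto
    have cases: "(x = a \<and> w0 = w \<and> x' \<notin> U) \<or> (x' = a \<and> w0 = w \<and> x \<notin> U)"
      using r unfolding nd_def by auto
    let ?D2 = "{r\<in>R. nd r \<subseteq> W \<and> Inr (x,x') \<in> nd r}"
    let ?Bad2 = "(\<lambda>y. (y,(x,x'))) ` B"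
    have "card ?Bad2 < 2*t" using card_image_le[OF fB, of "\<lambda>y. (y,(x,x'))"] cB by simp
    moreover have "2*t \<le> card ?D2" using deg[OF pW] .
    ultimately have "\<not> ?D2 \<subseteq> ?Bad2" using card_mono[of ?Bad2 ?D2] fB by fastforce
    then obtain w' y1 y2 where r2: "(w',(y1,y2)) \<in> ?D2" "(w',(y1,y2)) \<notin> ?Bad2" by auto
    have yy: "y1 = x" "y2 = x'" using r2(1) unfolding nd_def by auto
    have ww: "w' \<notin> B" using r2(2) yy by auto
    have E2: "(x,w') \<in> E" "(x',w') \<in> E" using r2(1) yy unfolding R_def N_def by auto
    have W2: "Inl (x,w') \<in> W" "Inl (x',w') \<in> W" using r2(1) yy unfolding nd_def by auto
    show ?thesis using cases
    proof
      assume h: "x = a \<and> w0 = w \<and> x' \<notin> U"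
      show ?thesis by (rule exI[of _ x'], rule exI[of _ w']) (use h ww E2 W2 xx in auto)
    next
      assume h: "x' = a \<and> w0 = w \<and> x \<notin> U"
      show ?thesis by (rule exI[of _ x], rule exI[of _ w']) (use h ww E2 W2 xx in auto)
    qed
  qed
  have inv: "\<exists>u w. (\<forall>i<Suc k. Inl (u i, w i) \<in> W) \<and> inj_on u {..<Suc k} \<and> inj_on w {..<Suc k} \<and>
      (\<forall>i. Suc i < Suc k \<longrightarrow> (u i, w (Suc i)) \<in> E \<and> (u (Suc i), w i) \<in> E)"
    if "Suc k \<le> t" for k
    using that
  proof (induction k)
    case 0
    from RAne obtain w0 x x' where "(w0,(x,x')) \<in> R" "nd (w0,(x,x')) \<subseteq> W" by auto
    hence "Inl (x,w0) \<in> W" unfolding nd_def by auto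
    moreover have "{..<Suc 0} = {0::nat}" by auto
    ultimately show ?case by (intro exI[of _ "\<lambda>_. x"] exI[of _ "\<lambda>_. w0"]) auto
  next
    case (Suc k)
    then obtain u w where uw: "\<forall>i<Suc k. Inl (u i, w i) \<in> W" "inj_on u {..<Suc k}" "inj_on w {..<Suc k}"
      "\<forall>i. Suc i < Suc k \<longrightarrow> (u i, w (Suc i)) \<in> E \<and> (u (Suc i), w i) \<in> E" by auto
    have lastW: "Inl (u k, w k) \<in> W" using uw(1) by auto
    have c1: "card (u ` {..<Suc k}) < t" using card_image_le[of "{..<Suc k}" u] Suc.prems by simp
    have c2: "card (w ` {..<Suc k}) < t" using card_image_le[of "{..<Suc k}" w] Suc.prems by simp
    obtain a' w' where aw: "a' \<notin> u ` {..<Suc k}" "w' \<notin> w ` {..<Suc k}" "(a', w k) \<in> E" "(u k, w') \<in> E" "Inl (a',w') \<in> W"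
      using step[OF lastW _ c1 _ c2] by blast
    define u' where "u' = u(Suc k := a')"
    define w'' where "w'' = w(Suc k := w')"
    have A: "\<forall>i<Suc (Suc k). Inl (u' i, w'' i) \<in> W" using uw(1) aw(5) unfolding u'_def w''_def
      by (auto simp: less_Suc_eq)
    have eqs: "{..<Suc (Suc k)} = insert (Suc k) {..<Suc k}" by auto
    have B: "inj_on u' {..<Suc (Suc k)}" unfolding eqs u'_def
      using uw(2) aw(1) by (auto simp: inj_on_def)
    have C: "inj_on w'' {..<Suc (Suc k)}" unfolding eqs w''_def
      using uw(3) aw(2) by (auto simp: inj_on_def)
    have D: "\<forall>i. Suc i < Suc (Suc k) \<longrightarrow> (u' i, w'' (Suc i)) \<in> E \<and> (u' (Suc i), w'' i) \<in> E"
      using uw(4) aw(3,4) unfolding u'_def w''_def by (auto simp: less_Suc_eq)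
    show ?case using A B C D by blast
  qed
  obtain k where tk: "t = Suc k" using False not0_implies_Suc by blast
  obtain u w where uw: "\<forall>i<t. Inl (u i, w i) \<in> W" "inj_on u {..<t}" "inj_on w {..<t}"
      "\<forall>i. Suc i < t \<longrightarrow> (u i, w (Suc i)) \<in> E \<and> (u (Suc i), w i) \<in> E"
    using inv[of k] tk by auto
  have rung: "(u i, w i) \<in> E" if "i < t" for i using alive uw(1) that by auto
  define f where "f p = (if fst p = odd (snd p) then Inl (u (snd p)) else Inr (w (snd p)))" for p :: "bool \<times> nat"
  have inj: "inj_on f (ladder_verts t)"
  proof (rule inj_onI)
    fix p q assume p: "p \<in> ladder_verts t" and q: "q \<in> ladder_verts t" and fpq: "f p = f q"
    obtain b i where pi: "p = (b,i)" by fastforce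
    obtain c j where qj: "q = (c,j)" by fastforce
    have it: "i < t" "j < t" using p q pi qj unfolding ladder_verts_def by auto
    show "p = q"
    proof (cases "b = odd i")
      case True
      hence "c = odd j" "u i = u j" using fpq unfolding pi qj f_def by (auto split: if_splits)
      hence "i = j" "c = odd j" using uw(2) it by (auto dest: inj_onD)
      thus ?thesis using True pi qj by simp
    next
      case False
      hence "c \<noteq> odd j" "w i = w j" using fpq unfolding pi qj f_def by (auto split: if_splits)
      hence "i = j" "c \<noteq> odd j" using uw(3) it by (auto dest: inj_onD)
      thus ?thesis using False pi qj by auto
    qed
  qed
  have img: "f ` ladder_verts t \<subseteq> Inl ` X \<union> Inr ` Y"
  proof
    fix z assume "z \<in> f ` ladder_verts t"
    then obtain b i where "z = f (b,i)" "i < t" unfolding ladder_verts_def by auto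
    thus "z \<in> Inl ` X \<union> Inr ` Y" using rung[of i] EXY unfolding f_def by auto
  qed
  have edges: "bip_adj E (f p) (f q)" if "ladder_edge t p q" for p q
  proof -
    obtain b i where pi: "p = (b,i)" by fastforce
    obtain c j where qj: "q = (c,j)" by fastforce
    have it: "i < t" "j < t" and cs: "(i = j \<and> b \<noteq> c) \<or> (b = c \<and> (j = Suc i \<or> i = Suc j))"
      using that unfolding pi qj ladder_edge_def ladder_verts_def by auto
    from cs show ?thesis
    proof (elim disjE conjE)
      assume "i = j" "b \<noteq> c"
      thus ?thesis using rung[OF it(1)] unfolding pi qj f_def bip_adj_def by auto
    next
      assume h: "b = c" "j = Suc i"
      thus ?thesis using uw(4) it unfolding pi qj f_def bip_adj_def by auto
    next
      assume h: "b = c" "i = Suc j"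
      thus ?thesis using uw(4) it unfolding pi qj f_def bip_adj_def by auto
    qed
  qed
  show ?thesis unfolding contains_ladder_def using inj img edges by blast
qed

end
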